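(* Let $a\in\mathbb F^*$. For $g\in\mathcal D_a$ write $x^n-a=hg$ with $h\in\mathcal R$, let $g_0$ be the constant coefficient of $g$, put $\widehat h^{l}=\rho_l(\theta^{-n}(h))$, and define $\delta_a(g)=\theta^{-\deg(g)}(-a^{-1}g_0)\,\widehat h^{l}$. Define $\sigma_b:\mathcal D_b\to\mathcal T_b$, $g\mapsto \mathrm{im}\,M^\theta_b(\overline g)$ for $b\in\{a,a^{-1}\}$, and $\tau_a:\mathcal T_a\to\mathcal T_{a^{-1}}$, $\mathcal C\mapsto\mathcal C^\perp$. Then $\delta_a$ is a well-defined map $\mathcal D_a\to\mathcal D_{a^{-1}}$, the maps $\delta_a,\sigma_a,\sigma_{a^{-1}},\tau_a$ are all lattice anti-isomorphisms, and $\sigma_{a^{-1}}\circ\delta_a=\tau_a\circ\sigma_a$. In particular, if $\mathcal C=\mathrm{im}\,M^\theta_a(\overline g)$ for some $g\in\mathcal D_a$, then $\mathcal C^\perp=\mathrm{im}\,M^\theta_{a^{-1}}(\overline{\delta_a(g)})=\mathrm{im}\,M^\theta_{a^{-1}}(\overline{\widehat h^{l}})$.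
   Context: $\mathbb F$ is a finite field, $\theta\in\mathrm{Aut}(\mathbb F)$, and $\mathcal R=\mathbb F[x;\theta]$ is the skew polynomial ring: elements $\sum_i f_ix^i$ with $f_i\in\mathbb F$ on the left, usual addition, multiplication determined by $xb=\theta(b)x$. $\theta$ and its integer powers act on $\mathcal R$ (and on $\mathbb F$) coefficientwise. $g\mid_r f$ means $f=sg$ for some $s\in\mathcal R$. Fix $n\in\mathbb N$. For $b\in\mathbb F^*$, $\mathcal S_b=\mathcal R/\mathcal R(x^n-b)$ (left $\mathcal R$-module), $\overline f$ is the coset of $f$ (in $M^\theta_b(\overline f)$ taken in $\mathcal S_b$), $\mathfrak p_b:\mathbb F^n\to\mathcal S_b$, $(c_0,\dots,c_{n-1})\mapsto\overline{\sum c_ix^i}$, and $\mathfrak v_b=\mathfrak p_b^{-1}$. The $(\theta,b)$-circulant $M^\theta_b(\overline f)$ is the $n\times n$ matrix whose row with index $i$ ($0\le i\le n-1$) is $\mathfrak v_b(\overline{x^if})$; $\mathrm{im}$ denotes row space. A subspace $\mathcal C\subseteq\mathbb F^n$ is $(\theta,b)$-constacyclic if $\mathfrak p_b(\mathcal C)$ is a left $\mathcal R$-submodule of $\mathcal S_b$. $\mathcal D_b$ is the set of monic right divisors of $x^n-b$, ordered by right divisibility; $\mathcal T_b$ is the set of $(\theta,b)$-constacyclic codes in $\mathbb F^n$, ordered by inclusion. $\mathcal C^\perp$ is the dual with respect to the standard bilinear form on $\mathbb F^n$. For nonzero $f=\sum_{i=0}^tf_ix^i$ with $f_t\neq0$,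 $\rho_l(f)=\sum_{i=0}^t\theta^i(f_{t-i})x^i$. A lattice anti-isomorphism is an order-reversing bijection whose inverse is order-reversing. *)

theory Defs
  imports "HOL-Computational_Algebra.Polynomial"
begin

text \<open>Skew polynomials over a field are represented by their coefficient
  sequences, i.e. by the type 'a poly (used only as a container for
  coefficients, degree, addition); multiplication is the skew product
  determined by x b = theta(b) x.\<close>

definition field_aut :: "('a::field \<Rightarrow> 'a) \<Rightarrow> bool" where
  "field_aut \<theta> \<longleftrightarrow> bij \<theta> \<and> (\<forall>x y. \<theta> (x + y) = \<theta> x + \<theta> y) \<and> (\<forall>x y. \<theta> (x * y) = \<theta> x * \<theta> y)"

definition skew_mult :: "('a::field \<Rightarrow> 'a) \<Rightarrow> 'a poly \<Rightarrow> 'a poly \<Rightarrow> 'a poly" where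
  "skew_mult \<theta> f g = (\<Sum>i\<le>degree f. \<Sum>j\<le>degree g. monom (coeff f i * (\<theta> ^^ i) (coeff g j)) (i + j))"

definition rdvd :: "('a::field \<Rightarrow> 'a) \<Rightarrow> 'a poly \<Rightarrow> 'a poly \<Rightarrow> bool" where
  "rdvd \<theta> g f \<longleftrightarrow> (\<exists>s. f = skew_mult \<theta> s g)"

definition xnb :: "nat \<Rightarrow> 'a::field \<Rightarrow> 'a poly" where
  "xnb n b = monom 1 n - [:b:]"

text \<open>Canonical representative (remainder of degree < n) of the coset of f in S_b.\<close>
definition rmod :: "('a::field \<Rightarrow> 'a) \<Rightarrow> nat \<Rightarrow> 'a \<Rightarrow> 'a poly \<Rightarrow> 'a poly" where
  "rmod \<theta> n b f = (THE r. degree r < n \<and> rdvd \<theta> (xnb n b) (f - r))"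

text \<open>Vectors of F^n are functions nat => 'a vanishing from index n on.\<close>
definition Fn :: "nat \<Rightarrow> (nat \<Rightarrow> 'a::zero) set" where
  "Fn n = {v. \<forall>i\<ge>n. v i = 0}"

definition vec_of :: "('a::field \<Rightarrow> 'a) \<Rightarrow> nat \<Rightarrow> 'a \<Rightarrow> 'a poly \<Rightarrow> (nat \<Rightarrow> 'a)" where
  "vec_of \<theta> n b f = (\<lambda>i. if i < n then coeff (rmod \<theta> n b f) i else 0)"

definition poly_of_vec :: "nat \<Rightarrow> (nat \<Rightarrow> 'a::field) \<Rightarrow> 'a poly" where
  "poly_of_vec n c = (\<Sum>i<n. monom (c i) i)"

text \<open>(theta,b)-circulant matrix of the coset of f, given by its rows.\<close>
definition circ :: "('a::field \<Rightarrow> 'a) \<Rightarrow> nat \<Rightarrow> 'a \<Rightarrow> 'a poly \<Rightarrow> nat \<Rightarrow> (nat \<Rightarrow> 'a)" where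
  "circ \<theta> n b f = (\<lambda>i. vec_of \<theta> n b (skew_mult \<theta> (monom 1 i) f))"

definition rowspace :: "nat \<Rightarrow> (nat \<Rightarrow> nat \<Rightarrow> 'a::field) \<Rightarrow> (nat \<Rightarrow> 'a) set" where
  "rowspace n M = {(\<lambda>j. \<Sum>i<n. c i * M i j) | c. True}"

definition lin_subspace :: "nat \<Rightarrow> (nat \<Rightarrow> 'a::field) set \<Rightarrow> bool" where
  "lin_subspace n C \<longleftrightarrow> C \<subseteq> Fn n \<and> (\<lambda>_. 0) \<in> C \<and>
     (\<forall>u\<in>C. \<forall>v\<in>C. (\<lambda>i. u i + v i) \<in> C) \<and> (\<forall>c. \<forall>v\<in>C. (\<lambda>i. c * v i) \<in> C)"

text \<open>(theta,b)-constacyclic: p_b(C) is a left R-submodule of S_b.\<close>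
definition constacyclic :: "('a::field \<Rightarrow> 'a) \<Rightarrow> nat \<Rightarrow> 'a \<Rightarrow> (nat \<Rightarrow> 'a) set \<Rightarrow> bool" where
  "constacyclic \<theta> n b C \<longleftrightarrow> lin_subspace n C \<and>
     (\<forall>v\<in>C. \<forall>r. vec_of \<theta> n b (skew_mult \<theta> r (poly_of_vec n v)) \<in> C)"

definition Dset :: "('a::field \<Rightarrow> 'a) \<Rightarrow> nat \<Rightarrow> 'a \<Rightarrow> 'a poly set" where
  "Dset \<theta> n b = {g. lead_coeff g = 1 \<and> rdvd \<theta> g (xnb n b)}"

definition Tset :: "('a::field \<Rightarrow> 'a) \<Rightarrow> nat \<Rightarrow> 'a \<Rightarrow> (nat \<Rightarrow> 'a) set set" where
  "Tset \<theta> n b = {C. constacyclic \<theta> n b C}"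

definition dual :: "nat \<Rightarrow> (nat \<Rightarrow> 'a::field) set \<Rightarrow> (nat \<Rightarrow> 'a) set" where
  "dual n C = {u \<in> Fn n. \<forall>v\<in>C. (\<Sum>i<n. u i * v i) = 0}"

definition sigma :: "('a::field \<Rightarrow> 'a) \<Rightarrow> nat \<Rightarrow> 'a \<Rightarrow> 'a poly \<Rightarrow> (nat \<Rightarrow> 'a) set" where
  "sigma \<theta> n b g = rowspace n (circ \<theta> n b g)"

definition rho_l :: "('a::field \<Rightarrow> 'a) \<Rightarrow> 'a poly \<Rightarrow> 'a poly" where
  "rho_l \<theta> f = (\<Sum>i\<le>degree f. monom ((\<theta> ^^ i) (coeff f (degree f - i))) i)"

definition cofactor :: "('a::field \<Rightarrow> 'a) \<Rightarrow> nat \<Rightarrow> 'a \<Rightarrow> 'a poly \<Rightarrow> 'a poly" where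
  "cofactor \<theta> n a g = (THE h. xnb n a = skew_mult \<theta> h g)"

definition hhat :: "('a::field \<Rightarrow> 'a) \<Rightarrow> nat \<Rightarrow> 'a poly \<Rightarrow> 'a poly" where
  "hhat \<theta> n h = rho_l \<theta> (map_poly ((inv \<theta>) ^^ n) h)"

definition delta :: "('a::field \<Rightarrow> 'a) \<Rightarrow> nat \<Rightarrow> 'a \<Rightarrow> 'a poly \<Rightarrow> 'a poly" where
  "delta \<theta> n a g = smult (((inv \<theta>) ^^ degree g) (- inverse a * coeff g 0)) (hhat \<theta> n (cofactor \<theta> n a g))"

definition anti_iso :: "'x set \<Rightarrow> ('x \<Rightarrow> 'x \<Rightarrow> bool) \<Rightarrow> 'y set \<Rightarrow> ('y \<Rightarrow> 'y \<Rightarrow> bool) \<Rightarrow> ('x \<Rightarrow> 'y) \<Rightarrow> bool" where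
  "anti_iso A leA B leB f \<longleftrightarrow> bij_betw f A B \<and>
     (\<forall>x\<in>A. \<forall>y\<in>A. leA x y \<longrightarrow> leB (f y) (f x)) \<and>
     (\<forall>u\<in>B. \<forall>v\<in>B. leB u v \<longrightarrow> leA (inv_into A f v) (inv_into A f u))"

end

theory Submission
  imports Defs
begin
locale skewctx =
  fixes \<theta> :: "'a::field \<Rightarrow> 'a"
  assumes aut: "field_aut \<theta>"
begin

lemma th_add: "\<theta> (x + y) = \<theta> x + \<theta> y" using aut by (simp add: field_aut_def)
lemma th_mult: "\<theta> (x * y) = \<theta> x * \<theta> y" using aut by (simp add: field_aut_def)
lemma th_bij: "bij \<theta>" using aut by (simp add: field_aut_def)
lemma th_inj: "inj \<theta>" using th_bij bij_def by blast
lemma th_0: "\<theta> 0 = 0"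
proof -
  have "\<theta> 0 + \<theta> 0 = \<theta> 0 + 0" using th_add[of 0 0] by simp
  then show ?thesis by (metis add_left_cancel)
qed
lemma th_eq0: "\<theta> x = 0 \<longleftrightarrow> x = 0"
  using th_inj th_0 by (metis injD)
lemma th_1: "\<theta> 1 = 1"
proof -
  have "\<theta> 1 = \<theta> 1 * \<theta> 1" using th_mult[of 1 1] by simp
  moreover have "\<theta> 1 \<noteq> 0" using th_eq0 by simp
  ultimately show ?thesis by (metis mult_cancel_left1)
qed
lemma th_neg: "\<theta> (- x) = - \<theta> x"
  using th_add[of x "-x"] th_0 minus_unique[of "\<theta> x" "\<theta> (-x)"] by simp

abbreviation T :: "nat \<Rightarrow> 'a \<Rightarrow> 'a" where "T k \<equiv> \<theta> ^^ k"

lemma T_add: "T k (x + y) = T k x + T k y" by (induct k) (auto simp: th_add)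
lemma T_mult: "T k (x * y) = T k x * T k y" by (induct k) (auto simp: th_mult)
lemma T_0[simp]: "T k 0 = 0" by (induct k) (auto simp: th_0)
lemma T_1[simp]: "T k 1 = 1" by (induct k) (auto simp: th_1)
lemma T_eq0[simp]: "T k x = 0 \<longleftrightarrow> x = 0" by (induct k) (auto simp: th_eq0)
lemma T_neg: "T k (- x) = - T k x" by (induct k) (auto simp: th_neg)
lemma T_diff: "T k (x - y) = T k x - T k y" by (metis T_add T_neg diff_conv_add_uminus)
lemma T_comp: "T i (T j x) = T (i + j) x" by (simp add: funpow_add)
lemma T_sum: "T k (sum f A) = (\<Sum>a\<in>A. T k (f a))"
  by (induct A rule: infinite_finite_induct) (auto simp: T_add)
lemma T_inverse: "T k (inverse x) = inverse (T k x)"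
proof (cases "x = 0")
  case False
  have "T k x * T k (inverse x) = 1" using T_mult[of k x "inverse x"] False by simp
  then show ?thesis using inverse_unique by metis
qed simp

end

context skewctx begin

abbreviation sm :: "'a poly \<Rightarrow> 'a poly \<Rightarrow> 'a poly" where "sm f g \<equiv> skew_mult \<theta> f g"

lemma coeff_skew: "coeff (sm f g) k = (\<Sum>i\<le>k. coeff f i * T i (coeff g (k - i)))"
proof -
  define c where "c i j = coeff f i * T i (coeff g j)" for i j
  define M where "M = k + degree f + degree g"
  have c0: "c i j = 0" if "i > degree f \<or> j > degree g" for i j
    using that by (auto simp: c_def coeff_eq_0)
  have "coeff (sm f g) k = (\<Sum>i\<le>degree f. \<Sum>j\<le>degree g. if i + j = k then c i j else 0)"
    unfolding c_def by (simp add: skew_mult_def coeff_sum coeff_monom)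
  also have "\<dots> = (\<Sum>i\<le>M. \<Sum>j\<le>M. if i + j = k then c i j else 0)"
  proof -
    have "(\<Sum>i\<le>degree f. \<Sum>j\<le>degree g. if i + j = k then c i j else 0)
        = (\<Sum>i\<le>degree f. \<Sum>j\<le>M. if i + j = k then c i j else 0)"
      by (intro sum.cong refl sum.mono_neutral_left) (auto simp: M_def c0)
    also have "\<dots> = (\<Sum>i\<le>M. \<Sum>j\<le>M. if i + j = k then c i j else 0)"
      by (intro sum.mono_neutral_left ballI sum.neutral) (auto simp: M_def c0)
    finally show ?thesis .
  qed
  also have "\<dots> = (\<Sum>i\<le>M. if i \<le> k then c i (k - i) else 0)"
  proof (rule sum.cong[OF refl])
    fix i assume "i \<in> {..M}"
    have "(\<Sum>j\<le>M. if i + j = k then c i j else 0) = (\<Sum>j\<le>M. if j = k - i then (if i \<le> k then c i j else 0) else 0)"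
      by (rule sum.cong) auto
    also have "\<dots> = (if i \<le> k then c i (k - i) else 0)"
      by (subst sum.delta) (auto simp: M_def)
    finally show "(\<Sum>j\<le>M. if i + j = k then c i j else 0) = (if i \<le> k then c i (k - i) else 0)" .
  qed
  also have "\<dots> = (\<Sum>i\<le>k. c i (k - i))"
  proof -
    have "(\<Sum>i\<le>M. if i \<le> k then c i (k - i) else 0) = (\<Sum>i\<le>k. if i \<le> k then c i (k - i) else 0)"
      by (intro sum.mono_neutral_right) (auto simp: M_def)
    then show ?thesis by simp
  qed
  finally show ?thesis by (simp add: c_def)
qed

lemma skew_0_left[simp]: "sm 0 g = 0" by (simp add: poly_eq_iff coeff_skew)
lemma skew_0_right[simp]: "sm f 0 = 0" by (simp add: poly_eq_iff coeff_skew)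
lemma skew_add_left: "sm (f + g) h = sm f h + sm g h"
  by (simp add: poly_eq_iff coeff_skew sum.distrib algebra_simps)
lemma skew_add_right: "sm h (f + g) = sm h f + sm h g"
  by (simp add: poly_eq_iff coeff_skew sum.distrib algebra_simps T_add)
lemma skew_minus_left: "sm (- f) h = - sm f h"
  by (simp add: poly_eq_iff coeff_skew sum_negf)
lemma skew_minus_right: "sm h (- f) = - sm h f"
  by (simp add: poly_eq_iff coeff_skew sum_negf T_neg)
lemma skew_diff_left: "sm (f - g) h = sm f h - sm g h"
  by (metis diff_conv_add_uminus skew_add_left skew_minus_left)
lemma skew_diff_right: "sm h (f - g) = sm h f - sm h g"
  by (metis diff_conv_add_uminus skew_add_right skew_minus_right)
lemma skew_smult_left: "sm (smult c f) g = smult c (sm f g)"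
  by (simp add: poly_eq_iff coeff_skew sum_distrib_left algebra_simps)
lemma skew_const_left: "sm [:c:] g = smult c g"
proof -
  have "coeff (sm [:c:] g) k = c * coeff g k" for k
  proof -
    have "coeff (sm [:c:] g) k = (\<Sum>i\<le>k. if i = 0 then c * coeff g k else 0)"
      unfolding coeff_skew by (rule sum.cong) (auto simp: coeff_pCons split: nat.splits)
    then show ?thesis by (simp add: sum.delta)
  qed
  then show ?thesis by (simp add: poly_eq_iff)
qed
lemma skew_one_left[simp]: "sm 1 g = g"
  using skew_const_left[of 1 g] by (simp add: one_pCons)
lemma coeff_skew_monom: "coeff (sm (monom c i) g) k = (if i \<le> k then c * T i (coeff g (k - i)) else 0)"
proof -
  have "coeff (sm (monom c i) g) k = (\<Sum>j\<le>k. if j = i then c * T i (coeff g (k - i)) else 0)"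
    unfolding coeff_skew by (rule sum.cong) (auto simp: coeff_monom)
  then show ?thesis by (simp add: sum.delta)
qed
lemma skew_sum_left: "sm (\<Sum>a\<in>A. f a) g = (\<Sum>a\<in>A. sm (f a) g)"
  by (induct A rule: infinite_finite_induct) (auto simp: skew_add_left)
lemma skew_sum_right: "sm g (\<Sum>a\<in>A. f a) = (\<Sum>a\<in>A. sm g (f a))"
  by (induct A rule: infinite_finite_induct) (auto simp: skew_add_right)

lemma skew_assoc: "sm (sm f g) h = sm f (sm g h)"
proof (rule poly_eqI)
  fix k
  define A where "A a b c = coeff f a * T a (coeff g b) * T (a + b) (coeff h c)" for a b c
  have "coeff (sm (sm f g) h) k = (\<Sum>i\<le>k. \<Sum>a\<le>i. A a (i - a) (k - i))"
    by (simp add: coeff_skew sum_distrib_right A_def mult.assoc)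
  also have "\<dots> = (\<Sum>(a,b)\<in>{(a,b). a + b \<le> k}. A a b (k - a - b))"
    by (subst sum.triangle_reindex_eq) (rule sum.cong, auto intro!: sum.cong)
  also have "\<dots> = (\<Sum>a\<le>k. \<Sum>b\<le>k - a. A a b (k - a - b))"
  proof -
    have "{(a,b). a + b \<le> k} = Sigma {..k} (\<lambda>a. {..k - a})" by auto
    then show ?thesis by (simp add: sum.Sigma)
  qed
  also have "\<dots> = coeff (sm f (sm g h)) k"
    by (simp add: coeff_skew sum_distrib_left A_def T_sum T_mult T_comp mult.assoc diff_diff_add)
  finally show "coeff (sm (sm f g) h) k = coeff (sm f (sm g h)) k" .
qed

end

context skewctx begin

lemma skew_coeff_high: "k > degree f + degree g \<Longrightarrow> coeff (sm f g) k = 0"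
  unfolding coeff_skew
proof (rule sum.neutral, rule ballI)
  fix i assume "k > degree f + degree g" "i \<in> {..k}"
  then have "i > degree f \<or> k - i > degree g" by auto
  then show "coeff f i * T i (coeff g (k - i)) = 0" by (auto simp: coeff_eq_0)
qed

lemma skew_coeff_top: "coeff (sm f g) (degree f + degree g) = lead_coeff f * T (degree f) (lead_coeff g)"
proof -
  let ?D = "degree f + degree g"
  have "coeff (sm f g) ?D = (\<Sum>i\<le>?D. if i = degree f then lead_coeff f * T (degree f) (lead_coeff g) else 0)"
    unfolding coeff_skew
  proof (rule sum.cong[OF refl])
    fix i assume "i \<in> {..?D}"
    show "coeff f i * T i (coeff g (?D - i)) = (if i = degree f then lead_coeff f * T (degree f) (lead_coeff g) else 0)"
    proof (cases "i = degree f")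
      case False
      then have "i > degree f \<or> ?D - i > degree g" using \<open>i \<in> {..?D}\<close> by auto
      then show ?thesis using False by (auto simp: coeff_eq_0)
    qed simp
  qed
  then show ?thesis by (simp add: sum.delta)
qed

lemma degree_skew: "f \<noteq> 0 \<Longrightarrow> g \<noteq> 0 \<Longrightarrow> degree (sm f g) = degree f + degree g"
  by (rule order.antisym) (auto intro!: degree_le le_degree simp: skew_coeff_high skew_coeff_top)

lemma lead_coeff_skew: "f \<noteq> 0 \<Longrightarrow> g \<noteq> 0 \<Longrightarrow> lead_coeff (sm f g) = lead_coeff f * T (degree f) (lead_coeff g)"
  by (simp add: degree_skew skew_coeff_top)

lemma skew_eq_0_iff: "sm f g = 0 \<longleftrightarrow> f = 0 \<or> g = 0"
proof (cases "f = 0 \<or> g = 0")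
  case False
  then have "coeff (sm f g) (degree f + degree g) \<noteq> 0" by (simp add: skew_coeff_top)
  then show ?thesis using False by auto
qed auto

lemma skew_cancel_right: "g \<noteq> 0 \<Longrightarrow> sm f g = sm f' g \<Longrightarrow> f = f'"
  by (metis eq_iff_diff_eq_0 skew_diff_left skew_eq_0_iff)
lemma skew_cancel_left: "f \<noteq> 0 \<Longrightarrow> sm f g = sm f g' \<Longrightarrow> g = g'"
  by (metis eq_iff_diff_eq_0 skew_diff_right skew_eq_0_iff)

lemma map_T_skew: "map_poly (T e) (sm f g) = sm (map_poly (T e) f) (map_poly (T e) g)"
  by (simp add: poly_eq_iff coeff_map_poly coeff_skew T_sum T_mult T_comp add.commute)

lemma xn_comm: "sm (monom 1 n) f = sm (map_poly (T n) f) (monom 1 n)"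
proof (rule poly_eqI)
  fix k
  have "coeff (sm (map_poly (T n) f) (monom 1 n)) k = (\<Sum>i\<le>k. if i = k - n then (if n \<le> k then T n (coeff f (k - n)) else 0) else 0)"
    unfolding coeff_skew by (rule sum.cong) (auto simp: coeff_map_poly coeff_monom)
  then show "coeff (sm (monom 1 n) f) k = coeff (sm (map_poly (T n) f) (monom 1 n)) k"
    by (simp add: coeff_skew_monom sum.delta)
qed

lemma skew_monom_smult: "sm (monom c i) g = smult c (sm (monom 1 i) g)"
  by (simp add: poly_eq_iff coeff_skew_monom)
lemma xi_smult: "sm (monom 1 i) (smult c f) = smult (T i c) (sm (monom 1 i) f)"
  by (simp add: poly_eq_iff coeff_skew_monom T_mult)

lemma rdiv_exists:
  assumes "g \<noteq> 0"
  shows "\<exists>q r. f = sm q g + r \<and> (r = 0 \<or> degree r < degree g)"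
proof (induction "degree f" arbitrary: f rule: less_induct)
  case less
  show ?case
  proof (cases "f = 0 \<or> degree f < degree g")
    case True
    then show ?thesis by (intro exI[of _ 0] exI[of _ f]) auto
  next
    case False
    then have f0: "f \<noteq> 0" and dg: "degree g \<le> degree f" by auto
    define e where "e = degree f - degree g"
    define c where "c = lead_coeff f / T e (lead_coeff g)"
    define f' where "f' = f - sm (monom c e) g"
    have lg: "T e (lead_coeff g) \<noteq> 0" using assms by simp
    have hi: "coeff f' k = 0" if "k \<ge> degree f" for k
    proof (cases "k = degree f")
      case True
      then show ?thesis using lg dg by (simp add: f'_def coeff_skew_monom e_def c_def)
    next
      case False
      then have "k > degree f" using that by auto
      then show ?thesis using dg
        by (auto simp: f'_def coeff_skew_monom e_def c_def coeff_eq_0)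
    qed
    show ?thesis
    proof (cases "f' = 0")
      case True
      then show ?thesis by (intro exI[of _ "monom c e"] exI[of _ 0]) (simp add: f'_def)
    next
      case False
      then have "degree f' < degree f"
        using hi by (metis leading_coeff_0_iff not_le)
      from less[OF this] obtain q r where "f' = sm q g + r" "r = 0 \<or> degree r < degree g" by blast
      then show ?thesis
        by (intro exI[of _ "q + monom c e"] exI[of _ r]) (auto simp: f'_def skew_add_left algebra_simps)
    qed
  qed
qed

lemma rdiv_unique:
  assumes g0: "g \<noteq> 0" and "sm q g + r = sm q' g + r'" "r = 0 \<or> degree r < degree g" "r' = 0 \<or> degree r' < degree g"
  shows "q = q' \<and> r = r'"
proof -
  have eq: "sm (q - q') g = r' - r" using assms(2) by (simp add: skew_diff_left algebra_simps)
  show ?thesis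
  proof (cases "q = q'")
    case True then show ?thesis using assms(2) by simp
  next
    case False
    have "degree (r' - r) < degree g \<or> r' - r = 0"
    proof (cases "degree g = 0")
      case True then show ?thesis using assms(3,4) by auto
    next
      case False
      then have "degree r < degree g" "degree r' < degree g" using assms(3,4) by auto
      then show ?thesis using degree_diff_le_max[of r' r] by auto
    qed
    moreover have "r' - r \<noteq> 0" using eq False g0 by (metis eq_iff_diff_eq_0 skew_eq_0_iff)
    moreover have "degree (r' - r) \<ge> degree g" using degree_skew[of "q - q'" g] eq False g0 by simp
    ultimately show ?thesis by auto
  qed
qed

end

definition Pm :: "nat \<Rightarrow> 'a::zero poly set" where "Pm m = {r. \<forall>i\<ge>m. coeff r i = 0}"

lemma Pm_iff: "r \<in> Pm m \<longleftrightarrow> r = 0 \<or> degree r < m"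
proof
  assume "r \<in> Pm m"
  then have "\<forall>i\<ge>m. coeff r i = 0" by (simp add: Pm_def)
  then show "r = 0 \<or> degree r < m"
    using leading_coeff_0_iff[of r] by (cases "r = 0") (auto simp: not_less[symmetric])
next
  assume "r = 0 \<or> degree r < m"
  then show "r \<in> Pm m" by (auto simp: Pm_def coeff_eq_0)
qed

lemma coeff_poly_of_vec: "coeff (poly_of_vec n c) k = (if k < n then c k else 0)"
  by (simp add: poly_of_vec_def coeff_sum coeff_monom)

lemma poly_of_vec_coeff: "\<forall>i\<ge>n. coeff r i = 0 \<Longrightarrow> poly_of_vec n (coeff r) = r"
  by (rule poly_eqI) (auto simp: coeff_poly_of_vec)

locale skewn = skewctx +
  fixes n :: nat and b :: 'a
  assumes n1: "n \<ge> 1" and b0: "b \<noteq> 0"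
begin

abbreviation X where "X \<equiv> xnb n b"

lemma coeff_X: "coeff X k = (if k = n then 1 else if k = 0 then - b else 0)"
  using n1 by (auto simp: xnb_def coeff_monom coeff_pCons split: nat.splits)
lemma degree_X[simp]: "degree X = n"
  using n1 by (auto intro!: order.antisym degree_le le_degree simp: coeff_X)
lemma X_nz[simp]: "X \<noteq> 0" using n1 degree_X by (metis degree_0 not_one_le_zero)
lemma lc_X[simp]: "lead_coeff X = 1" using n1 by (simp add: coeff_X)

lemma rmod_unique: "degree r1 < n \<Longrightarrow> f - r1 = sm s1 X \<Longrightarrow> degree r2 < n \<Longrightarrow> f - r2 = sm s2 X \<Longrightarrow> r1 = r2"
proof -
  assume a: "degree r1 < n" "f - r1 = sm s1 X" "degree r2 < n" "f - r2 = sm s2 X"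
  then have "sm s1 X + r1 = sm s2 X + r2" by (metis diff_add_cancel)
  from rdiv_unique[OF X_nz this] a show "r1 = r2" by auto
qed

lemma rmod_ex: "\<exists>r s. degree r < n \<and> f - r = sm s X"
proof -
  obtain q r where "f = sm q X + r" "r = 0 \<or> degree r < n"
    using rdiv_exists[of X f] by auto
  then show ?thesis using n1 by (intro exI[of _ r] exI[of _ q]) auto
qed

lemma rmod_spec: "degree (rmod \<theta> n b f) < n \<and> rdvd \<theta> X (f - rmod \<theta> n b f)"
  unfolding rmod_def rdvd_def
  by (rule theI') (use rmod_ex rmod_unique in blast)

lemma rmod_eqI: "degree r < n \<Longrightarrow> f - r = sm s X \<Longrightarrow> rmod \<theta> n b f = r"
  using rmod_spec[of f] rmod_unique unfolding rdvd_def by metis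

lemma rmod_low: "degree f < n \<Longrightarrow> rmod \<theta> n b f = f"
  by (rule rmod_eqI[of _ _ 0]) auto

lemma rmod_dvd: "\<exists>s. f - rmod \<theta> n b f = sm s X"
  using rmod_spec unfolding rdvd_def by blast

lemma rmod_add: "rmod \<theta> n b (f + g) = rmod \<theta> n b f + rmod \<theta> n b g"
proof -
  obtain s1 s2 where "f - rmod \<theta> n b f = sm s1 X" "g - rmod \<theta> n b g = sm s2 X" using rmod_dvd by metis
  moreover have "degree (rmod \<theta> n b f + rmod \<theta> n b g) < n"
    using rmod_spec[of f] rmod_spec[of g] degree_add_le_max[of "rmod \<theta> n b f" "rmod \<theta> n b g"] by linarith
  ultimately show ?thesis
    by (intro rmod_eqI[of _ _ "s1 + s2"]) (auto simp: skew_add_left algebra_simps)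
qed

lemma rmod_smult: "rmod \<theta> n b (smult c f) = smult c (rmod \<theta> n b f)"
proof -
  obtain s where "f - rmod \<theta> n b f = sm s X" using rmod_dvd by metis
  moreover have "degree (smult c (rmod \<theta> n b f)) < n"
    using rmod_spec[of f] degree_smult_le[of c "rmod \<theta> n b f"] by linarith
  ultimately show ?thesis
    by (intro rmod_eqI[of _ _ "smult c s"]) (auto simp: skew_smult_left simp flip: smult_diff_right)
qed

lemma rmod_0[simp]: "rmod \<theta> n b 0 = 0" by (rule rmod_low) (use n1 in auto)

lemma rmod_sum: "rmod \<theta> n b (\<Sum>a\<in>A. f a) = (\<Sum>a\<in>A. rmod \<theta> n b (f a))"
  by (induct A rule: infinite_finite_induct) (auto simp: rmod_add)

lemma rmod_X_mult: "rmod \<theta> n b (sm s X + f) = rmod \<theta> n b f"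
proof -
  obtain s1 where "f - rmod \<theta> n b f = sm s1 X" using rmod_dvd by metis
  then show ?thesis
    by (intro rmod_eqI[of _ _ "s + s1"]) (auto simp: rmod_spec skew_add_left algebra_simps)
qed

lemma rmod_mult_rmod: "rmod \<theta> n b (sm s f) = rmod \<theta> n b (sm s (rmod \<theta> n b f))"
proof -
  obtain s1 where "f - rmod \<theta> n b f = sm s1 X" using rmod_dvd by metis
  then have "sm s f = sm (sm s s1) X + sm s (rmod \<theta> n b f)"
    by (metis diff_add_cancel skew_add_right skew_assoc)
  then show ?thesis by (simp add: rmod_X_mult)
qed

lemma vec_of_eq: "vec_of \<theta> n b f = coeff (rmod \<theta> n b f)"
  using rmod_spec[of f] by (auto simp: vec_of_def fun_eq_iff coeff_eq_0)

end

lemma Pm_0[simp]: "0 \<in> Pm m" by (simp add: Pm_def)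
lemma Pm_add: "r \<in> Pm m \<Longrightarrow> s \<in> Pm m \<Longrightarrow> r + s \<in> Pm m" by (simp add: Pm_def)
lemma Pm_smult: "r \<in> Pm m \<Longrightarrow> smult c r \<in> Pm m" by (simp add: Pm_def)

context skewn begin

lemma div_facts:
  assumes "X = sm h g"
  shows "g \<noteq> 0" "h \<noteq> 0" "degree h + degree g = n" "lead_coeff h * T (degree h) (lead_coeff g) = 1"
    "coeff h 0 * coeff g 0 = - b"
proof -
  show g0: "g \<noteq> 0" using assms X_nz skew_0_right by auto
  show h0: "h \<noteq> 0" using assms X_nz skew_0_left by auto
  show "degree h + degree g = n" using degree_skew[OF h0 g0] assms[symmetric] by simp
  show "lead_coeff h * T (degree h) (lead_coeff g) = 1" using lead_coeff_skew[OF h0 g0] assms[symmetric] by (simp add: coeff_X)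
  have "coeff X 0 = coeff h 0 * coeff g 0" using assms by (simp add: coeff_skew)
  then show "coeff h 0 * coeff g 0 = - b" using n1 by (simp add: coeff_X)
qed

lemma low_deg:
  assumes "X = sm h g" "r \<in> Pm (degree h)"
  shows "degree (sm r g) < n"
proof (cases "r = 0")
  case False
  have "degree r < degree h" using assms(2) False by (simp add: Pm_iff)
  then show ?thesis using degree_skew[OF False div_facts(1)[OF assms(1)]] div_facts(3)[OF assms(1)] by simp
qed (use n1 in auto)

lemma rmod_mult_div:
  assumes "X = sm h g"
  shows "\<exists>r'\<in>Pm (degree h). rmod \<theta> n b (sm r g) = sm r' g"
proof -
  obtain q r' where qr: "r = sm q h + r'" "r' = 0 \<or> degree r' < degree h"
    using rdiv_exists[OF div_facts(2)[OF assms]] by blast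
  then have P: "r' \<in> Pm (degree h)" by (simp add: Pm_iff)
  have "sm r g = sm q X + sm r' g" using qr assms by (simp add: skew_add_left skew_assoc)
  then have "rmod \<theta> n b (sm r g) = sm r' g" using rmod_X_mult rmod_low[OF low_deg[OF assms P]] by simp
  then show ?thesis using P by blast
qed

lemma circ_comb: "(\<lambda>j. \<Sum>i<n. c i * circ \<theta> n b g i j) = coeff (rmod \<theta> n b (sm (poly_of_vec n c) g))"
proof -
  have "sm (poly_of_vec n c) g = (\<Sum>i<n. smult (c i) (sm (monom 1 i) g))"
    unfolding poly_of_vec_def skew_sum_left by (rule sum.cong[OF refl], rule skew_monom_smult)
  then show ?thesis
    by (simp add: rmod_sum rmod_smult coeff_sum circ_def vec_of_eq fun_eq_iff)
qed

lemma sigma_char: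
  assumes "X = sm h g"
  shows "sigma \<theta> n b g = (\<lambda>r. coeff (sm r g)) ` Pm (degree h)"
proof
  show "sigma \<theta> n b g \<subseteq> (\<lambda>r. coeff (sm r g)) ` Pm (degree h)"
  proof
    fix v assume "v \<in> sigma \<theta> n b g"
    then obtain c where "v = (\<lambda>j. \<Sum>i<n. c i * circ \<theta> n b g i j)"
      by (auto simp: sigma_def rowspace_def)
    then have "v = coeff (rmod \<theta> n b (sm (poly_of_vec n c) g))" by (simp add: circ_comb)
    moreover obtain r' where "r' \<in> Pm (degree h)" "rmod \<theta> n b (sm (poly_of_vec n c) g) = sm r' g"
      using rmod_mult_div[OF assms] by blast
    ultimately show "v \<in> (\<lambda>r. coeff (sm r g)) ` Pm (degree h)" by auto
  qed
next
  show "(\<lambda>r. coeff (sm r g)) ` Pm (degree h) \<subseteq> sigma \<theta> n b g"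
  proof
    fix v assume "v \<in> (\<lambda>r. coeff (sm r g)) ` Pm (degree h)"
    then obtain r where r: "r \<in> Pm (degree h)" "v = coeff (sm r g)" by auto
    have "degree h \<le> n" using div_facts(3)[OF assms] by simp
    then have "\<forall>i\<ge>n. coeff r i = 0" using r(1) by (auto simp: Pm_def)
    then have "poly_of_vec n (coeff r) = r" by (rule poly_of_vec_coeff)
    then have "v = (\<lambda>j. \<Sum>i<n. coeff r i * circ \<theta> n b g i j)"
      using r rmod_low[OF low_deg[OF assms r(1)]] by (simp add: circ_comb)
    then show "v \<in> sigma \<theta> n b g" by (auto simp: sigma_def rowspace_def)
  qed
qed

lemma rmod_in_sigma:
  assumes "X = sm h g"
  shows "coeff (rmod \<theta> n b (sm r g)) \<in> sigma \<theta> n b g"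
  using rmod_mult_div[OF assms, of r] sigma_char[OF assms] by auto

lemma sigma_in_T:
  assumes "X = sm h g"
  shows "sigma \<theta> n b g \<in> Tset \<theta> n b"
proof -
  note sc = sigma_char[OF assms]
  have hz: "coeff (sm r g) i = 0" if "r \<in> Pm (degree h)" "n \<le> i" for r i
    using low_deg[OF assms that(1)] that(2) by (simp add: coeff_eq_0)
  have sub: "sigma \<theta> n b g \<subseteq> Fn n"
    using hz by (auto simp: sc Fn_def)
  have z: "(\<lambda>_. 0) \<in> sigma \<theta> n b g" unfolding sc by (rule image_eqI[of _ _ 0]) auto
  have ad: "(\<lambda>i. u i + v i) \<in> sigma \<theta> n b g" if uv: "u \<in> sigma \<theta> n b g" "v \<in> sigma \<theta> n b g" for u v
  proof -
    obtain r where "r \<in> Pm (degree h)" "u = coeff (sm r g)"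
      using uv(1) unfolding sc by auto
    moreover obtain s where "s \<in> Pm (degree h)" "v = coeff (sm s g)"
      using uv(2) unfolding sc by auto
    ultimately show ?thesis unfolding sc
      by (intro image_eqI[of _ _ "r + s"]) (auto simp: Pm_add skew_add_left fun_eq_iff)
  qed
  have sc2: "(\<lambda>i. c * v i) \<in> sigma \<theta> n b g" if vv: "v \<in> sigma \<theta> n b g" for c v
  proof -
    obtain r where "r \<in> Pm (degree h)" "v = coeff (sm r g)"
      using vv unfolding sc by auto
    then show ?thesis unfolding sc
      by (intro image_eqI[of _ _ "smult c r"]) (auto simp: Pm_smult skew_smult_left fun_eq_iff)
  qed
  have cl: "vec_of \<theta> n b (sm s (poly_of_vec n v)) \<in> sigma \<theta> n b g" if vv: "v \<in> sigma \<theta> n b g" for v s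
  proof -
    obtain r where r: "r \<in> Pm (degree h)" "v = coeff (sm r g)"
      using vv unfolding sc by auto
    have "\<forall>i\<ge>n. coeff (sm r g) i = 0" using low_deg[OF assms r(1)] by (auto simp: coeff_eq_0)
    then have "poly_of_vec n v = sm r g" using r(2) poly_of_vec_coeff by blast
    then show ?thesis using rmod_in_sigma[OF assms, of "sm s r"] by (simp add: vec_of_eq skew_assoc)
  qed
  show ?thesis
    using sub z ad sc2 cl by (simp add: Tset_def constacyclic_def lin_subspace_def)
qed

lemma monic_dvd_eq:
  assumes "lead_coeff g1 = 1" "lead_coeff g2 = 1" "g2 = sm s g1" "degree g2 \<le> degree g1"
  shows "g2 = g1"
proof -
  have g1: "g1 \<noteq> 0" "g2 \<noteq> 0" using assms(1,2) by auto
  then have s0: "s \<noteq> 0" using assms(3) by auto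
  have "degree s = 0" using degree_skew[OF s0 g1(1)] assms(3,4) by simp
  moreover have "lead_coeff s = 1" using lead_coeff_skew[OF s0 g1(1)] assms by simp
  ultimately have "s = 1" using degree_0_id[of s] by (simp add: one_pCons)
  then show ?thesis using assms(3) by simp
qed

lemma dvd_degree: "g2 = sm s g1 \<Longrightarrow> g2 \<noteq> 0 \<Longrightarrow> degree g1 \<le> degree g2"
proof -
  assume a: "g2 = sm s g1" "g2 \<noteq> 0"
  then have "s \<noteq> 0" "g1 \<noteq> 0" by auto
  then show ?thesis using degree_skew[of s g1] a by simp
qed

lemma sigma_order:
  assumes "X = sm h1 g1" "X = sm h2 g2" "lead_coeff h2 = 1"
  shows "rdvd \<theta> g1 g2 \<longleftrightarrow> sigma \<theta> n b g2 \<subseteq> sigma \<theta> n b g1"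
proof
  assume "rdvd \<theta> g1 g2"
  then obtain s where s: "g2 = sm s g1" by (auto simp: rdvd_def)
  show "sigma \<theta> n b g2 \<subseteq> sigma \<theta> n b g1"
  proof
    fix v assume "v \<in> sigma \<theta> n b g2"
    then obtain r where r: "r \<in> Pm (degree h2)" "v = coeff (sm r g2)" by (auto simp: sigma_char[OF assms(2)])
    have "v = coeff (rmod \<theta> n b (sm (sm r s) g1))"
      using r rmod_low[OF low_deg[OF assms(2) r(1)]] s by (simp add: skew_assoc)
    then show "v \<in> sigma \<theta> n b g1" using rmod_in_sigma[OF assms(1)] by simp
  qed
next
  assume sub: "sigma \<theta> n b g2 \<subseteq> sigma \<theta> n b g1"
  show "rdvd \<theta> g1 g2"
  proof (cases "degree h2 = 0")
    case True
    then have "h2 = 1" using assms(3) degree_0_id[of h2] by (simp add: one_pCons)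
    then show ?thesis using assms by (auto simp: rdvd_def)
  next
    case False
    then have "1 \<in> Pm (degree h2)" by (simp add: Pm_iff)
    then have "coeff g2 \<in> sigma \<theta> n b g2" unfolding sigma_char[OF assms(2)] by (rule image_eqI[rotated]) simp
    then have "coeff g2 \<in> sigma \<theta> n b g1" using sub by auto
    then obtain r where "coeff g2 = coeff (sm r g1)" unfolding sigma_char[OF assms(1)] by auto
    then show ?thesis by (auto simp: rdvd_def coeff_inject)
  qed
qed

end

context skewn begin

lemma rmod_X[simp]: "rmod \<theta> n b X = 0"
  by (rule rmod_eqI[of _ _ 1]) (use n1 in auto)

lemma T_is_sigma:
  assumes C: "C \<in> Tset \<theta> n b"
  shows "\<exists>g h. lead_coeff g = 1 \<and> X = sm h g \<and> C = sigma \<theta> n b g"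
proof -
  have sub: "C \<subseteq> Fn n" and z: "(\<lambda>_. 0) \<in> C"
    and ad: "\<And>u v. u \<in> C \<Longrightarrow> v \<in> C \<Longrightarrow> (\<lambda>i. u i + v i) \<in> C"
    and sc: "\<And>c v. v \<in> C \<Longrightarrow> (\<lambda>i. c * v i) \<in> C"
    and cl: "\<And>v r. v \<in> C \<Longrightarrow> vec_of \<theta> n b (sm r (poly_of_vec n v)) \<in> C"
    using C by (auto simp: Tset_def constacyclic_def lin_subspace_def)
  define I where "I = {f. coeff (rmod \<theta> n b f) \<in> C}"
  have XI: "X \<in> I" using z by (simp add: I_def zero_poly.rep_eq[symmetric])
  have IR: "sm s f \<in> I" if "f \<in> I" for s f
  proof -
    have "coeff (rmod \<theta> n b f) \<in> C" using that by (simp add: I_def)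
    moreover have "poly_of_vec n (coeff (rmod \<theta> n b f)) = rmod \<theta> n b f"
      using rmod_spec[of f] by (intro poly_of_vec_coeff) (auto simp: coeff_eq_0)
    ultimately have "vec_of \<theta> n b (sm s (rmod \<theta> n b f)) \<in> C" using cl by metis
    then show ?thesis by (simp add: I_def vec_of_eq rmod_mult_rmod[symmetric])
  qed
  have Idiff: "f - g \<in> I" if "f \<in> I" "g \<in> I" for f g
  proof -
    from that have u: "coeff (rmod \<theta> n b f) \<in> C" and v: "coeff (rmod \<theta> n b g) \<in> C"
      by (simp_all add: I_def)
    have e: "(\<lambda>i. coeff (rmod \<theta> n b f) i + (\<lambda>i. (-1) * coeff (rmod \<theta> n b g) i) i) \<in> C"
      by (rule ad[OF u sc[OF v]])
    have "f - g = f + smult (-1) g" by simp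
    then have "coeff (rmod \<theta> n b (f - g)) = (\<lambda>i. coeff (rmod \<theta> n b f) i + (\<lambda>i. (-1) * coeff (rmod \<theta> n b g) i) i)"
      by (simp only: rmod_add rmod_smult) (simp add: fun_eq_iff)
    then show ?thesis using e by (simp add: I_def)
  qed
  have "\<exists>g0. (g0 \<in> I \<and> g0 \<noteq> 0) \<and> (\<forall>y. y \<in> I \<and> y \<noteq> 0 \<longrightarrow> degree g0 \<le> degree y)"
    by (rule ex_has_least_nat[of "\<lambda>g. g \<in> I \<and> g \<noteq> 0" X degree]) (use XI in auto)
  then obtain g0 where g0: "g0 \<in> I" "g0 \<noteq> 0" and mn: "\<And>y. y \<in> I \<Longrightarrow> y \<noteq> 0 \<Longrightarrow> degree g0 \<le> degree y"
    by blast
  define g where "g = smult (inverse (lead_coeff g0)) g0"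
  have gI: "g \<in> I" using IR[OF g0(1), of "[:inverse (lead_coeff g0):]"] by (simp add: g_def skew_const_left)
  have g1: "lead_coeff g = 1" using g0 by (simp add: g_def)
  have dg: "degree g = degree g0" using g0 by (simp add: g_def)
  have gnz: "g \<noteq> 0" using g1 by auto
  have allI: "\<exists>q. f = sm q g" if "f \<in> I" for f
  proof -
    obtain q r where qr: "f = sm q g + r" "r = 0 \<or> degree r < degree g"
      using rdiv_exists[OF gnz] by blast
    have "r = f - sm q g" using qr by simp
    then have "r \<in> I" using Idiff[OF that IR[OF gI]] by simp
    then have "r = 0" using qr(2) mn[of r] dg by linarith
    then show ?thesis using qr by auto
  qed
  obtain h where h: "X = sm h g" using allI[OF XI] by blast
  have "C = sigma \<theta> n b g"
  proof
    show "C \<subseteq> sigma \<theta> n b g"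
    proof
      fix v assume v: "v \<in> C"
      then have vF: "\<forall>i\<ge>n. v i = 0" using sub by (auto simp: Fn_def)
      define f where "f = poly_of_vec n v"
      have cf: "coeff f = v" using vF by (auto simp: f_def coeff_poly_of_vec fun_eq_iff)
      have "f \<in> Pm n" using cf vF by (simp add: Pm_def)
      then have "degree f < n" using n1 by (auto simp: Pm_iff)
      then have rf: "rmod \<theta> n b f = f" by (rule rmod_low)
      then have "f \<in> I" using v cf by (simp add: I_def)
      then obtain q where "f = sm q g" using allI by blast
      then have "v = coeff (rmod \<theta> n b (sm q g))" using rf cf by simp
      then show "v \<in> sigma \<theta> n b g" using rmod_in_sigma[OF h] by simp
    qed
  next
    show "sigma \<theta> n b g \<subseteq> C"
    proof
      fix v assume "v \<in> sigma \<theta> n b g"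
      then obtain r where r: "r \<in> Pm (degree h)" "v = coeff (sm r g)" by (auto simp: sigma_char[OF h])
      have "sm r g \<in> I" using IR[OF gI] by blast
      then show "v \<in> C" using r rmod_low[OF low_deg[OF h r(1)]] by (simp add: I_def)
    qed
  qed
  then show ?thesis using g1 h by blast
qed

lemma D_iff: "g \<in> Dset \<theta> n b \<longleftrightarrow> lead_coeff g = 1 \<and> (\<exists>h. X = sm h g)"
  by (auto simp: Dset_def rdvd_def)

lemma cof_monic:
  assumes "lead_coeff g = 1" "X = sm h g"
  shows "lead_coeff h = 1"
  using div_facts(4)[OF assms(2)] assms(1) by simp

lemma sigma_order_D:
  assumes "g1 \<in> Dset \<theta> n b" "g2 \<in> Dset \<theta> n b"
  shows "rdvd \<theta> g1 g2 \<longleftrightarrow> sigma \<theta> n b g2 \<subseteq> sigma \<theta> n b g1"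
  using assms sigma_order cof_monic unfolding D_iff by metis

lemma D_antisym:
  assumes "g1 \<in> Dset \<theta> n b" "g2 \<in> Dset \<theta> n b" "rdvd \<theta> g1 g2" "rdvd \<theta> g2 g1"
  shows "g1 = g2"
proof -
  obtain s t where st: "g2 = sm s g1" "g1 = sm t g2" using assms(3,4) by (auto simp: rdvd_def)
  have l: "lead_coeff g1 = 1" "lead_coeff g2 = 1" using assms(1,2) by (auto simp: D_iff)
  then have nz: "g1 \<noteq> 0" "g2 \<noteq> 0" by auto
  have "degree g1 \<le> degree g2" "degree g2 \<le> degree g1"
    using dvd_degree[OF st(1) nz(2)] dvd_degree[OF st(2) nz(1)] by auto
  then show ?thesis using monic_dvd_eq[OF l st(1)] by simp
qed

lemma sigma_bij: "bij_betw (sigma \<theta> n b) (Dset \<theta> n b) (Tset \<theta> n b)"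
proof (rule bij_betw_imageI)
  show "inj_on (sigma \<theta> n b) (Dset \<theta> n b)"
  proof (rule inj_onI)
    fix g1 g2 assume a: "g1 \<in> Dset \<theta> n b" "g2 \<in> Dset \<theta> n b" "sigma \<theta> n b g1 = sigma \<theta> n b g2"
    then show "g1 = g2" using D_antisym[OF a(1,2)] sigma_order_D[OF a(1,2)] sigma_order_D[OF a(2,1)] by auto
  qed
  show "sigma \<theta> n b ` Dset \<theta> n b = Tset \<theta> n b"
  proof
    show "sigma \<theta> n b ` Dset \<theta> n b \<subseteq> Tset \<theta> n b" using sigma_in_T by (auto simp: D_iff)
    show "Tset \<theta> n b \<subseteq> sigma \<theta> n b ` Dset \<theta> n b"
    proof
      fix C assume "C \<in> Tset \<theta> n b"
      then obtain g h where "lead_coeff g = 1" "X = sm h g" "C = sigma \<theta> n b g" using T_is_sigma by blast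
      then show "C \<in> sigma \<theta> n b ` Dset \<theta> n b" by (metis D_iff image_eqI)
    qed
  qed
qed

end

lemma Fn_finite: "finite (Fn n :: (nat \<Rightarrow> 'a::{zero,finite}) set)"
proof -
  have "Fn n = {f :: nat \<Rightarrow> 'a. \<forall>x. (x \<in> {..<n} \<longrightarrow> f x \<in> UNIV) \<and> (x \<notin> {..<n} \<longrightarrow> f x = 0)}"
    unfolding Fn_def by (rule Collect_cong) auto
  then show ?thesis using finite_set_of_finite_funs[of "{..<n}" "UNIV :: 'a set" 0] by simp
qed

lemma Pm_finite: "finite (Pm m :: 'a::{zero,finite} poly set)"
proof -
  have "coeff ` (Pm m :: 'a poly set) \<subseteq> Fn m" by (auto simp: Pm_def Fn_def)
  then have "finite (coeff ` (Pm m :: 'a poly set))" by (rule finite_subset) (rule Fn_finite)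
  moreover have "inj_on coeff (Pm m :: 'a poly set)" by (rule inj_onI) (simp add: coeff_inject)
  ultimately show ?thesis by (rule finite_imageD)
qed

context skewctx begin

lemma coeff_rho: "coeff (rho_l \<theta> f) t = (if t \<le> degree f then T t (coeff f (degree f - t)) else 0)"
proof -
  have "coeff (rho_l \<theta> f) t = (\<Sum>i\<le>degree f. if i = t then T t (coeff f (degree f - t)) else 0)"
    unfolding rho_l_def coeff_sum by (rule sum.cong[OF refl]) (simp add: coeff_monom)
  then show ?thesis by (simp add: sum.delta)
qed

lemma T_inj: assumes "T k x = T k y" shows "x = y"
proof -
  have "T k (x - y) = 0" using assms by (simp add: T_diff)
  then show ?thesis by simp
qed

lemma degree_rho: assumes "coeff f 0 \<noteq> 0" shows "degree (rho_l \<theta> f) = degree f"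
proof (rule order.antisym)
  show "degree (rho_l \<theta> f) \<le> degree f" by (auto intro!: degree_le simp: coeff_rho)
  have "coeff (rho_l \<theta> f) (degree f) \<noteq> 0" using assms by (simp add: coeff_rho)
  then show "degree f \<le> degree (rho_l \<theta> f)" by (rule le_degree)
qed

lemma lc_rho: "lead_coeff (rho_l \<theta> f) = T (degree f) (coeff f 0)" if "coeff f 0 \<noteq> 0"
  using that by (simp add: degree_rho coeff_rho)

lemma degree_map_T[simp]: "degree (map_poly (T e) f) = degree f"
  by (rule degree_map_poly) simp

lemma coeff_map_T[simp]: "coeff (map_poly (T e) f) k = T e (coeff f k)"
  by (simp add: coeff_map_poly)

lemma map_T_T: "map_poly (T a) (map_poly (T c) f) = map_poly (T (a + c)) f"
  by (rule poly_eqI) (simp add: T_comp)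

lemma rho_map: "rho_l \<theta> (map_poly (T e) f) = map_poly (T e) (rho_l \<theta> f)"
  by (rule poly_eqI) (simp add: coeff_rho T_comp add.commute)

lemma rho_mult:
  assumes f0: "f \<noteq> 0" and g0: "g \<noteq> 0"
  shows "rho_l \<theta> (sm f g) = sm (map_poly (T (degree f)) (rho_l \<theta> g)) (rho_l \<theta> f)"
proof (rule poly_eqI)
  fix k
  define t where "t = degree f"
  define s where "s = degree g"
  have dfg: "degree (sm f g) = t + s" using degree_skew[OF f0 g0] by (simp add: t_def s_def)
  define G where "G a = T k (coeff f (t + a - k)) * T (t + a) (coeff g (s - a))" for a
  have R: "coeff (sm (map_poly (T t) (rho_l \<theta> g)) (rho_l \<theta> f)) k
      = (\<Sum>a\<le>k. if a \<le> s \<and> k \<le> a + t then G a else 0)"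
    unfolding coeff_skew
  proof (rule sum.cong[OF refl])
    fix a assume a: "a \<in> {..k}"
    show "coeff (map_poly (T t) (rho_l \<theta> g)) a * T a (coeff (rho_l \<theta> f) (k - a)) =
         (if a \<le> s \<and> k \<le> a + t then G a else 0)"
      using a by (auto simp: coeff_rho G_def T_comp s_def t_def mult.commute add.commute
          intro!: arg_cong2[where f = "(*)"] arg_cong[where f = "\<lambda>x. T x _"] arg_cong[where f = "coeff f"])
  qed
  show "coeff (rho_l \<theta> (sm f g)) k = coeff (sm (map_poly (T t) (rho_l \<theta> g)) (rho_l \<theta> f)) k"
  proof (cases "k \<le> t + s")
    case False
    then have "coeff (rho_l \<theta> (sm f g)) k = 0" by (simp add: coeff_rho dfg)
    moreover have "(\<Sum>a\<le>k. if a \<le> s \<and> k \<le> a + t then G a else 0) = 0"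
      using False by (intro sum.neutral) auto
    ultimately show ?thesis using R by simp
  next
    case True
    define H where "H i = T k (coeff f i) * T (k + i) (coeff g (t + s - k - i))" for i
    have L: "coeff (rho_l \<theta> (sm f g)) k = (\<Sum>i\<le>t + s - k. H i)"
      using True by (simp add: coeff_rho dfg coeff_skew T_sum T_mult T_comp H_def)
    also have "\<dots> = (\<Sum>i\<in>{i. i \<le> t + s - k \<and> i \<le> t \<and> t \<le> i + k}. H i)"
    proof (intro sum.mono_neutral_right ballI)
      fix i assume "i \<in> {..t + s - k} - {i. i \<le> t + s - k \<and> i \<le> t \<and> t \<le> i + k}"
      then have "i > t \<or> t + s - k - i > s" by auto
      then show "H i = 0" by (auto simp: H_def coeff_eq_0 t_def s_def)
    qed auto
    also have "\<dots> = (\<Sum>a\<in>{a. a \<le> k \<and> a \<le> s \<and> k \<le> a + t}. G a)"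
    proof (rule sum.reindex_bij_witness[where i = "\<lambda>a. t + a - k" and j = "\<lambda>i. i + k - t"])
      fix a assume "a \<in> {a. a \<le> k \<and> a \<le> s \<and> k \<le> a + t}"
      then show "t + a - k + k - t = a" "t + a - k \<in> {i. i \<le> t + s - k \<and> i \<le> t \<and> t \<le> i + k}" by auto
    next
      fix i assume i: "i \<in> {i. i \<le> t + s - k \<and> i \<le> t \<and> t \<le> i + k}"
      then show "t + (i + k - t) - k = i" using True by auto
      show "i + k - t \<in> {a. a \<le> k \<and> a \<le> s \<and> k \<le> a + t}" using i True by auto
      have "t + s - k - i = s - (i + k - t)" "k + i = t + (i + k - t)" using i True by auto
      then show "G (i + k - t) = H i" by (simp add: H_def G_def)
    qed
    also have "\<dots> = (\<Sum>a\<le>k. if a \<le> s \<and> k \<le> a + t then G a else 0)"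
      by (subst sum.If_cases) (auto intro!: sum.cong)
    finally show ?thesis using R by simp
  qed
qed

end

context skewn begin

lemma rho_X: "rho_l \<theta> X = monom (- T n b) n + 1"
proof (rule poly_eqI)
  fix k show "coeff (rho_l \<theta> X) k = coeff (monom (- T n b) n + 1) k"
    using n1 by (auto simp: coeff_rho coeff_X coeff_monom T_neg coeff_1)
qed

end

context skewctx begin

lemma coeff_skew_const_right: "coeff (sm r [:c:]) k = coeff r k * T k c"
proof -
  have "coeff (sm r [:c:]) k = (\<Sum>i\<le>k. if i = k then coeff r k * T k c else 0)"
    unfolding coeff_skew by (rule sum.cong[OF refl]) (auto simp: coeff_pCons split: nat.splits)
  then show ?thesis by (simp add: sum.delta)
qed

lemma Pm_mult_const: "r \<in> Pm m \<Longrightarrow> sm r [:c:] \<in> Pm m"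
  by (simp add: Pm_def coeff_skew_const_right)

lemma coeff_lin: "r \<in> Pm d \<Longrightarrow> coeff (sm r f) l = (\<Sum>i<d. coeff r i * coeff (sm (monom 1 i) f) l)"
proof -
  assume r: "r \<in> Pm d"
  then have "poly_of_vec d (coeff r) = r" by (intro poly_of_vec_coeff) (auto simp: Pm_def)
  then have "sm r f = (\<Sum>i<d. smult (coeff r i) (sm (monom 1 i) f))"
    unfolding poly_of_vec_def by (metis (no_types, lifting) skew_sum_left skew_monom_smult sum.cong)
  then show ?thesis by (simp add: coeff_sum)
qed

lemma bilin_zero:
  fixes A B :: "nat \<Rightarrow> nat \<Rightarrow> 'a" and a c :: "nat \<Rightarrow> 'a"
  assumes "\<And>i j. i < d \<Longrightarrow> j < m \<Longrightarrow> (\<Sum>l<n. A i l * B j l) = 0"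
  shows "(\<Sum>l<n. (\<Sum>i<d. a i * A i l) * (\<Sum>j<m. c j * B j l)) = 0"
proof -
  have "(\<Sum>l<n. (\<Sum>i<d. a i * A i l) * (\<Sum>j<m. c j * B j l))
      = (\<Sum>l<n. \<Sum>i<d. \<Sum>j<m. (a i * c j) * (A i l * B j l))"
  proof (rule sum.cong[OF refl])
    fix l
    show "(\<Sum>i<d. a i * A i l) * (\<Sum>j<m. c j * B j l) = (\<Sum>i<d. \<Sum>j<m. (a i * c j) * (A i l * B j l))"
      unfolding sum_product by (rule sum.cong[OF refl], rule sum.cong[OF refl]) (simp add: mult_ac)
  qed
  also have "\<dots> = (\<Sum>i<d. \<Sum>l<n. \<Sum>j<m. (a i * c j) * (A i l * B j l))"
    by (rule sum.swap)
  also have "\<dots> = (\<Sum>i<d. \<Sum>j<m. \<Sum>l<n. (a i * c j) * (A i l * B j l))"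
    by (rule sum.cong[OF refl], rule sum.swap)
  also have "\<dots> = (\<Sum>i<d. \<Sum>j<m. (a i * c j) * (\<Sum>l<n. A i l * B j l))"
    by (simp add: sum_distrib_left)
  also have "\<dots> = 0" using assms by simp
  finally show ?thesis .
qed

end

locale skewnf = skewn \<theta> n b for \<theta> :: "'a::{field,finite} \<Rightarrow> 'a" and n b
begin

lemma fin_order: "\<exists>N>0. \<forall>x. T N x = x"
proof -
  have "\<not> inj (\<lambda>k::nat. T k)"
  proof
    assume "inj (\<lambda>k::nat. T k)"
    moreover have "finite (range (\<lambda>k::nat. T k))" by simp
    ultimately have "finite (UNIV :: nat set)" using finite_imageD by blast
    then show False by simp
  qed
  then obtain i j where ij: "i \<noteq> j" "T i = T j" unfolding inj_def by blast
  have "\<exists>i j. i < j \<and> T i = T j"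
    using ij by (metis linorder_neqE_nat)
  then obtain i j where ij: "i < j" "T i = T j" by blast
  have "T (j - i) x = x" for x
  proof -
    have "T i (T (j - i) x) = T j x" using ij(1) by (simp add: T_comp)
    also have "\<dots> = T i x" using ij(2) by simp
    finally show ?thesis by (rule T_inj)
  qed
  then show ?thesis using ij(1) by (intro exI[of _ "j - i"]) auto
qed

definition ordN where "ordN = (SOME N. N > 0 \<and> (\<forall>x. T N x = x))"

lemma ordN: "ordN > 0" "T ordN x = x"
  using someI_ex[OF fin_order] unfolding ordN_def by auto

lemma T_mod: "T (k * ordN + r) x = T r x"
proof (induct k)
  case (Suc k)
  have "T (Suc k * ordN + r) x = T ordN (T (k * ordN + r) x)" by (simp add: T_comp algebra_simps)
  then show ?case using Suc ordN(2) by simp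
qed simp

lemma inv_theta: "inv \<theta> = T (ordN - 1)"
proof
  fix x
  have "\<theta> (T (ordN - 1) x) = x" using ordN
    by (metis (no_types, lifting) One_nat_def Suc_pred comp_apply funpow.simps(2))
  then show "inv \<theta> x = T (ordN - 1) x" using th_inj by (metis inv_f_f)
qed

lemma inv_pow: "(inv \<theta>) ^^ k = T ((ordN - 1) * k)"
  by (simp add: inv_theta funpow_mult)

end

lemma rowspace_scale:
  fixes M :: "nat \<Rightarrow> nat \<Rightarrow> 'a::field"
  assumes "\<And>i. t i \<noteq> 0"
  shows "rowspace n (\<lambda>i j. t i * M i j) = rowspace n M"
proof
  show "rowspace n (\<lambda>i j. t i * M i j) \<subseteq> rowspace n M"
  proof
    fix v assume "v \<in> rowspace n (\<lambda>i j. t i * M i j)"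
    then obtain a where "v = (\<lambda>j. \<Sum>i<n. a i * (t i * M i j))" by (auto simp: rowspace_def)
    then have "v = (\<lambda>j. \<Sum>i<n. (a i * t i) * M i j)" by (simp add: mult.assoc)
    then show "v \<in> rowspace n M" by (auto simp: rowspace_def)
  qed
  show "rowspace n M \<subseteq> rowspace n (\<lambda>i j. t i * M i j)"
  proof
    fix v assume "v \<in> rowspace n M"
    then obtain a where "v = (\<lambda>j. \<Sum>i<n. a i * M i j)" by (auto simp: rowspace_def)
    moreover have "(\<lambda>j. \<Sum>i<n. a i * M i j) = (\<lambda>j. \<Sum>i<n. (a i / t i) * (t i * M i j))"
      using assms by simp
    ultimately have "v = (\<lambda>j. \<Sum>i<n. (\<lambda>i. a i / t i) i * (t i * M i j))" by simp
    then show "v \<in> rowspace n (\<lambda>i j. t i * M i j)" unfolding rowspace_def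
      by (intro CollectI exI[of _ "\<lambda>i. a i / t i"]) simp
  qed
qed

context skewn begin

lemma sigma_smult:
  assumes "c \<noteq> 0"
  shows "sigma \<theta> n b (smult c f) = sigma \<theta> n b f"
proof -
  have "circ \<theta> n b (smult c f) = (\<lambda>i j. T i c * circ \<theta> n b f i j)"
    by (simp add: circ_def fun_eq_iff xi_smult vec_of_eq rmod_smult)
  then show ?thesis using assms by (simp add: sigma_def rowspace_scale)
qed

end

context skewnf begin

definition "EE = (ordN - 1) * n"

lemma T_nE: "T n (T EE x) = x"
proof -
  have "n + EE = n * ordN + 0" using ordN(1) by (cases ordN) (auto simp: algebra_simps EE_def)
  then have "T n (T EE x) = T (n * ordN + 0) x" by (simp only: T_comp)
  then show ?thesis using T_mod[of n 0 x] by simp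
qed

context
  fixes g h
  assumes lg: "lead_coeff g = 1" and Xhg: "X = sm h g"
begin

definition "hp = map_poly (T EE) h"
definition "hh = rho_l \<theta> hp"

lemma g_nz: "g \<noteq> 0" and h_nz: "h \<noteq> 0" using div_facts[OF Xhg] by auto
lemma dgh: "degree h + degree g = n" using div_facts[OF Xhg] by auto
lemma lh: "lead_coeff h = 1" using cof_monic[OF lg Xhg] .
lemma h0g0: "coeff h 0 * coeff g 0 = - b" using div_facts[OF Xhg] by auto
lemma h0: "coeff h 0 \<noteq> 0" using h0g0 b0 by auto
lemma g0: "coeff g 0 \<noteq> 0" using h0g0 b0 by auto
lemma deg_hp: "degree hp = degree h" by (simp add: hp_def)
lemma hp_nz: "hp \<noteq> 0" using h_nz by (metis deg_hp coeff_map_T hp_def leading_coeff_0_iff T_eq0)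
lemma coeff_hp: "coeff hp k = T EE (coeff h k)" by (simp add: hp_def)
lemma deg_hh: "degree hh = degree h"
  unfolding hh_def by (subst degree_rho) (auto simp: coeff_hp h0 deg_hp)
lemma coeff_hh: "coeff hh t = (if t \<le> degree h then T t (T EE (coeff h (degree h - t))) else 0)"
  by (simp add: hh_def coeff_rho deg_hp coeff_hp)

lemma gh_coeff:
  assumes "0 < k" "k < n"
  shows "coeff (sm g hp) k = 0"
proof -
  have mapn: "map_poly (T n) hp = h" by (rule poly_eqI) (simp add: coeff_hp T_nE)
  have "sm h (sm g hp) = sm X hp" by (simp add: Xhg skew_assoc)
  also have "\<dots> = sm (monom 1 n) hp - smult b hp"
    by (simp add: xnb_def skew_diff_left skew_const_left)
  also have "\<dots> = sm h (monom 1 n) - smult b hp" by (simp add: xn_comm mapn)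
  finally have e: "sm h (sm g hp - monom 1 n) = - smult b hp" by (simp add: skew_diff_right)
  define v where "v = sm g hp - monom 1 n"
  have "coeff v k = 0"
  proof (cases "v = 0")
    case False
    have "degree (sm h v) = degree h + degree v" using degree_skew[OF h_nz False] .
    moreover have "degree (- smult b hp) = degree h" using b0 by (simp add: deg_hp)
    ultimately have "degree v = 0" using e by (simp add: v_def)
    then show ?thesis using assms by (simp add: coeff_eq_0)
  qed simp
  then show ?thesis using assms by (simp add: v_def coeff_monom)
qed

lemma core_orth:
  assumes i: "i < degree g" and j: "j < degree h"
  shows "(\<Sum>l<n. coeff (sm (monom 1 i) hh) l * coeff (sm (monom 1 j) g) l) = 0"
proof -
  define m where "m = degree h"
  define d where "d = degree g"
  have nmd: "n = m + d" using dgh by (simp add: m_def d_def)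
  define k where "k = m + i - j"
  define F where "F q = T j (coeff g q) * T (j + (q + EE)) (coeff h (k - q))" for q
  have step1: "coeff (sm (monom 1 i) hh) l * coeff (sm (monom 1 j) g) l
      = (if j \<le> l \<and> l \<le> k + j then F (l - j) else 0)" for l
  proof (cases "j \<le> l \<and> l \<le> k + j")
    case True
    show ?thesis
    proof (cases "i \<le> l")
      case il: True
      have "l - i \<le> m" using True i j unfolding k_def m_def by arith
      then have "coeff (sm (monom 1 i) hh) l = T (l + EE) (coeff h (k - (l - j)))"
        using il True j by (simp add: coeff_skew_monom coeff_hh T_comp m_def k_def)
      moreover have "j + (l - j + EE) = l + EE" using True by simp
      ultimately show ?thesis using True by (simp add: coeff_skew_monom F_def mult.commute)
    next
      case il: False
      then have "k - (l - j) > m" using True j by (simp add: k_def m_def)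
      then have "coeff h (k - (l - j)) = 0" by (simp add: coeff_eq_0 m_def)
      then show ?thesis using il True by (simp add: coeff_skew_monom F_def)
    qed
  next
    case False
    show ?thesis
    proof (cases "l < j")
      case True then show ?thesis using False by (simp add: coeff_skew_monom)
    next
      case lj: False
      then have "l > k + j" using False by simp
      then have "i \<le> l \<longrightarrow> l - i > m" using j by (simp add: k_def m_def)
      then have "coeff (sm (monom 1 i) hh) l = 0" by (auto simp: coeff_skew_monom coeff_hh m_def)
      then show ?thesis using False by (simp only: if_False mult_zero_left)
    qed
  qed
  have kn: "k + j < n" using i j nmd by (simp add: k_def m_def d_def)
  have "(\<Sum>l<n. coeff (sm (monom 1 i) hh) l * coeff (sm (monom 1 j) g) l)
      = (\<Sum>l<n. if l \<in> {j..k + j} then F (l - j) else 0)"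
    by (rule sum.cong[OF refl]) (simp add: step1)
  also have "\<dots> = (\<Sum>l\<in>{..<n} \<inter> {j..k + j}. F (l - j))"
    by (rule sum.inter_restrict[symmetric]) simp
  also have "{..<n} \<inter> {j..k + j} = {0 + j..k + j}" using kn by auto
  also have "(\<Sum>l\<in>{0 + j..k + j}. F (l - j)) = (\<Sum>q\<in>{0..k}. F q)"
    by (subst sum.shift_bounds_cl_nat_ivl) simp
  also have "\<dots> = T j (coeff (sm g hp) k)"
    by (simp add: coeff_skew T_sum T_mult T_comp F_def coeff_hp atLeast0AtMost)
  also have "\<dots> = 0"
  proof -
    have "0 < k" "k < n" using i j nmd by (auto simp: k_def m_def d_def)
    then show ?thesis by (simp add: gh_coeff)
  qed
  finally show ?thesis .
qed

lemma orth:
  assumes r: "r \<in> Pm (degree g)" and s: "s \<in> Pm (degree h)"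
  shows "(\<Sum>l<n. coeff (sm r hh) l * coeff (sm s g) l) = 0"
  unfolding coeff_lin[OF r] coeff_lin[OF s]
  by (rule bilin_zero) (rule core_orth)


lemma T_En: "T EE (T n x) = x"
  using T_nE[of x] by (simp add: T_comp add.commute)

lemma cofactor_eq: "cofactor \<theta> n b g = h"
  unfolding cofactor_def
proof (rule the_equality)
  show "X = sm h g" by (rule Xhg)
  fix h2 assume "X = sm h2 g"
  then show "h2 = h" using Xhg skew_cancel_right[OF g_nz] by metis
qed

lemma EE_eq: "(ordN - 1) * n = EE" by (simp add: EE_def)

lemma hhat_eq: "hhat \<theta> n h = hh"
  unfolding hhat_def hh_def hp_def inv_pow EE_def ..

definition "cc = T ((ordN - 1) * degree g) (- inverse b * coeff g 0)"

lemma delta_eq: "delta \<theta> n b g = smult cc hh"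
  by (simp add: delta_def cofactor_eq hhat_eq cc_def inv_pow)

lemma cc_lc: "cc * lead_coeff hh = 1"
proof -
  define m where "m = degree h"
  define d where "d = degree g"
  have nmd: "n = m + d" using dgh by (simp add: m_def d_def)
  have lhh: "lead_coeff hh = T (m + EE) (coeff h 0)"
    by (simp add: deg_hh coeff_hh T_comp m_def)
  have "m + EE = m * ordN + (ordN - 1) * d"
    using ordN(1) unfolding EE_def unfolding nmd by (cases ordN) (auto simp: algebra_simps)
  then have "lead_coeff hh = T ((ordN - 1) * d) (coeff h 0)" using lhh T_mod by simp
  then have "cc * lead_coeff hh = T ((ordN - 1) * d) (- inverse b * coeff g 0) * T ((ordN - 1) * d) (coeff h 0)"
    by (simp add: cc_def d_def)
  also have "\<dots> = T ((ordN - 1) * d) (- inverse b * coeff g 0 * coeff h 0)"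
    by (rule T_mult[symmetric])
  also have "- inverse b * coeff g 0 * coeff h 0 = 1" using h0g0 b0
    by (simp add: field_simps mult.commute)
  finally show ?thesis by simp
qed

lemma cc_nz: "cc \<noteq> 0" using cc_lc by auto

lemma delta_deg: "degree (smult cc hh) = degree h" using cc_nz by (simp add: deg_hh)
lemma delta_lc: "lead_coeff (smult cc hh) = 1" using cc_lc cc_nz by (simp add: deg_hh)
lemma delta_nz: "smult cc hh \<noteq> 0" using delta_lc by auto

lemma delta_div: "\<exists>W. xnb n (inverse b) = sm W (smult cc hh)"
proof -
  have "rho_l \<theta> X = sm (map_poly (T (degree h)) (rho_l \<theta> g)) (rho_l \<theta> h)"
    using rho_mult[OF h_nz g_nz] Xhg by simp
  then have "map_poly (T EE) (rho_l \<theta> X) = sm (map_poly (T EE) (map_poly (T (degree h)) (rho_l \<theta> g))) hh"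
    by (simp add: map_T_skew rho_map[symmetric] hh_def hp_def)
  moreover have "map_poly (T EE) (rho_l \<theta> X) = monom (- b) n + 1"
    using n1 by (intro poly_eqI) (auto simp: rho_X coeff_monom coeff_1 T_neg T_En)
  ultimately obtain W0 where W0: "monom (- b) n + 1 = sm W0 hh" by metis
  have "xnb n (inverse b) = smult (- inverse b) (monom (- b) n + 1)"
    using b0 n1 by (intro poly_eqI) (auto simp: xnb_def coeff_monom coeff_1 coeff_pCons split: nat.splits)
  also have "\<dots> = sm (smult (- inverse b) W0) hh" by (simp add: W0 skew_smult_left skew_minus_left)
  also have "hh = sm [:inverse cc:] (smult cc hh)" using cc_nz by (simp add: skew_const_left)
  finally have "xnb n (inverse b) = sm (sm (smult (- inverse b) W0) [:inverse cc:]) (smult cc hh)"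
    by (simp add: skew_assoc)
  then show ?thesis by blast
qed

lemma delta_in_D: "delta \<theta> n b g \<in> Dset \<theta> n (inverse b)"
  using delta_div delta_lc by (auto simp: delta_eq Dset_def rdvd_def)

lemma dual_inj:
  assumes u: "u \<in> dual n (sigma \<theta> n b g)" and w: "w \<in> dual n (sigma \<theta> n b g)"
    and eq: "\<forall>i<degree g. u i = w i"
  shows "u = w"
proof -
  define z where "z i = u i - w i" for i
  have zo: "(\<Sum>l<n. z l * v l) = 0" if "v \<in> sigma \<theta> n b g" for v
  proof -
    have "(\<Sum>l<n. z l * v l) = (\<Sum>l<n. u l * v l) - (\<Sum>l<n. w l * v l)"
      by (simp add: z_def left_diff_distrib sum_subtractf)
    then show ?thesis using u w that by (simp add: dual_def)
  qed
  have uF: "\<forall>i\<ge>n. u i = 0" and wF: "\<forall>i\<ge>n. w i = 0" using u w by (auto simp: dual_def Fn_def)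
  have "z l = 0" for l
  proof (induction l rule: less_induct)
    case (less l)
    show ?case
    proof (cases "l < degree g \<or> l \<ge> n")
      case True then show ?thesis using eq uF wF by (auto simp: z_def)
    next
      case False
      define j where "j = l - degree g"
      have jm: "j < degree h" using False dgh unfolding j_def by arith
      have "monom 1 j \<in> Pm (degree h)" using jm by (simp add: Pm_def coeff_monom)
      then have vin: "coeff (sm (monom 1 j) g) \<in> sigma \<theta> n b g"
        unfolding sigma_char[OF Xhg] by (rule imageI)
      have "(\<Sum>p<n. z p * coeff (sm (monom 1 j) g) p) = (\<Sum>p<n. if p = l then z l else 0)"
      proof (rule sum.cong[OF refl])
        fix p assume "p \<in> {..<n}"
        show "z p * coeff (sm (monom 1 j) g) p = (if p = l then z l else 0)"
        proof (cases "p < l")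
          case True then show ?thesis using less by simp
        next
          case pl: False
          show ?thesis
          proof (cases "p = l")
            case True
            then have "p - j = degree g" "j \<le> p" using False by (auto simp: j_def)
            then show ?thesis using True lg by (simp add: coeff_skew_monom)
          next
            case False
            then have "p - j > degree g" "j \<le> p" using pl \<open>\<not> (l < degree g \<or> l \<ge> n)\<close> by (auto simp: j_def)
            then show ?thesis using False by (simp add: coeff_skew_monom coeff_eq_0)
          qed
        qed
      qed
      also have "\<dots> = z l" using False by simp
      finally show ?thesis using zo[OF vin] by simp
    qed
  qed
  then show ?thesis by (auto simp: z_def fun_eq_iff)
qed


lemma key_sigma: "sigma \<theta> n (inverse b) (delta \<theta> n b g) = dual n (sigma \<theta> n b g)"
proof -
  interpret B: skewnf \<theta> n "inverse b" by unfold_locales (use n1 b0 in auto)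
  obtain W where XW: "xnb n (inverse b) = sm W (smult cc hh)" using delta_div by blast
  have dW: "degree W = degree g" using B.div_facts(3)[OF XW] delta_deg dgh by simp
  have sc: "sigma \<theta> n (inverse b) (smult cc hh) = (\<lambda>r. coeff (sm r (smult cc hh))) ` Pm (degree g)"
    using B.sigma_char[OF XW] dW by simp
  have sub: "sigma \<theta> n (inverse b) (smult cc hh) \<subseteq> dual n (sigma \<theta> n b g)"
  proof
    fix u assume "u \<in> sigma \<theta> n (inverse b) (smult cc hh)"
    then obtain r where r: "r \<in> Pm (degree g)" "u = coeff (sm r (smult cc hh))" by (auto simp: sc)
    have "degree (sm r (smult cc hh)) < n" using B.low_deg[OF XW] r(1) dW by simp
    then have uF: "u \<in> Fn n" using r(2) by (auto simp: Fn_def coeff_eq_0)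
    have u2: "u = coeff (sm (sm r [:cc:]) hh)" using r(2) by (simp add: skew_assoc skew_const_left)
    have r2: "sm r [:cc:] \<in> Pm (degree g)" using r(1) by (rule Pm_mult_const)
    show "u \<in> dual n (sigma \<theta> n b g)"
      unfolding dual_def
    proof (intro CollectI conjI ballI uF)
      fix v assume "v \<in> sigma \<theta> n b g"
      then obtain s where s: "s \<in> Pm (degree h)" "v = coeff (sm s g)" by (auto simp: sigma_char[OF Xhg])
      show "(\<Sum>i<n. u i * v i) = 0" using orth[OF r2 s(1)] u2 s(2) by simp
    qed
  qed
  have finD: "finite (dual n (sigma \<theta> n b g))"
    by (rule finite_subset[OF _ Fn_finite]) (auto simp: dual_def)
  have c1: "card (dual n (sigma \<theta> n b g)) \<le> card (Pm (degree g) :: 'a poly set)"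
  proof (rule card_inj_on_le[of "poly_of_vec (degree g)"])
    show "inj_on (poly_of_vec (degree g)) (dual n (sigma \<theta> n b g))"
    proof (rule inj_onI)
      fix u w assume "u \<in> dual n (sigma \<theta> n b g)" "w \<in> dual n (sigma \<theta> n b g)"
        "poly_of_vec (degree g) u = poly_of_vec (degree g) w"
      moreover have "\<forall>i<degree g. u i = w i"
        using arg_cong[OF \<open>poly_of_vec (degree g) u = poly_of_vec (degree g) w\<close>, of "\<lambda>p. coeff p _"]
        by (metis coeff_poly_of_vec)
      ultimately show "u = w" using dual_inj by blast
    qed
    show "poly_of_vec (degree g) ` dual n (sigma \<theta> n b g) \<subseteq> Pm (degree g)"
      by (auto simp: Pm_def coeff_poly_of_vec)
    show "finite (Pm (degree g) :: 'a poly set)" by (rule Pm_finite)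
  qed
  have c2: "card (Pm (degree g) :: 'a poly set) \<le> card (sigma \<theta> n (inverse b) (smult cc hh))"
  proof (rule card_inj_on_le[of "\<lambda>r. coeff (sm r (smult cc hh))"])
    show "inj_on (\<lambda>r. coeff (sm r (smult cc hh))) (Pm (degree g))"
      by (rule inj_onI) (use skew_cancel_right[OF delta_nz] in \<open>simp add: coeff_inject\<close>)
    show "(\<lambda>r. coeff (sm r (smult cc hh))) ` Pm (degree g) \<subseteq> sigma \<theta> n (inverse b) (smult cc hh)"
      by (simp add: sc)
    show "finite (sigma \<theta> n (inverse b) (smult cc hh))" using finD sub finite_subset by blast
  qed
  have "sigma \<theta> n (inverse b) (smult cc hh) = dual n (sigma \<theta> n b g)"
    using card_subset_eq[OF finD sub] c1 c2 card_mono[OF finD sub] by linarith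
  then show ?thesis by (simp add: delta_eq)
qed

lemma key_deg: "degree (delta \<theta> n b g) = degree h"
  using delta_deg by (simp add: delta_eq)

lemma key_hhat: "sigma \<theta> n (inverse b) (hhat \<theta> n h) = sigma \<theta> n (inverse b) (delta \<theta> n b g)"
proof -
  interpret B: skewnf \<theta> n "inverse b" by unfold_locales (use n1 b0 in auto)
  show ?thesis using B.sigma_smult[OF cc_nz, of hh] by (simp add: hhat_eq delta_eq)
qed

end
end

lemma anti_iso_intro:
  assumes "bij_betw f A B" "\<And>x y. x \<in> A \<Longrightarrow> y \<in> A \<Longrightarrow> leA x y \<longleftrightarrow> leB (f y) (f x)"
  shows "anti_iso A leA B leB f"
  unfolding anti_iso_def
proof (intro conjI ballI impI)
  show "bij_betw f A B" by fact
  fix x y assume "x \<in> A" "y \<in> A" "leA x y" then show "leB (f y) (f x)" using assms(2) by blast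
next
  fix u v assume uv: "u \<in> B" "v \<in> B" "leB u v"
  have im: "f ` A = B" using assms(1) by (simp add: bij_betw_def)
  have "inv_into A f u \<in> A" "inv_into A f v \<in> A" using uv im by (auto intro: inv_into_into)
  moreover have "f (inv_into A f u) = u" "f (inv_into A f v) = v" using uv im by (auto intro: f_inv_into_f)
  ultimately show "leA (inv_into A f v) (inv_into A f u)"
    using assms(2)[of "inv_into A f v" "inv_into A f u"] uv(3) by simp
qed

lemma dual_anti: "C \<subseteq> D \<Longrightarrow> dual n D \<subseteq> dual n C"
  by (auto simp: dual_def)

lemma dual_dual_sub: "C \<subseteq> Fn n \<Longrightarrow> C \<subseteq> dual n (dual n C)"
  unfolding dual_def by (auto simp: mult.commute)

context skewnf begin

lemma keyD:
  assumes "g \<in> Dset \<theta> n b"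
  shows "delta \<theta> n b g \<in> Dset \<theta> n (inverse b)"
    "sigma \<theta> n (inverse b) (delta \<theta> n b g) = dual n (sigma \<theta> n b g)"
    "degree (delta \<theta> n b g) = n - degree g"
    "degree g \<le> n"
proof -
  obtain h where lg: "lead_coeff g = 1" and Xh: "X = sm h g" using assms by (auto simp: D_iff)
  show "delta \<theta> n b g \<in> Dset \<theta> n (inverse b)" by (rule delta_in_D[OF lg Xh])
  show "sigma \<theta> n (inverse b) (delta \<theta> n b g) = dual n (sigma \<theta> n b g)" by (rule key_sigma[OF lg Xh])
  show "degree (delta \<theta> n b g) = n - degree g" using key_deg[OF lg Xh] dgh[OF lg Xh] by simp
  show "degree g \<le> n" using dgh[OF lg Xh] by simp
qed

lemma sigma_Fn: "g \<in> Dset \<theta> n b \<Longrightarrow> sigma \<theta> n b g \<subseteq> Fn n"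
proof -
  assume "g \<in> Dset \<theta> n b"
  then have "sigma \<theta> n b g \<in> Tset \<theta> n b" by (rule bij_betw_apply[OF sigma_bij])
  then show ?thesis by (simp add: Tset_def constacyclic_def lin_subspace_def)
qed

lemma sigma_anti: "anti_iso (Dset \<theta> n b) (rdvd \<theta>) (Tset \<theta> n b) (\<subseteq>) (sigma \<theta> n b)"
  by (rule anti_iso_intro[OF sigma_bij]) (rule sigma_order_D)

end

lemma round_trip:
  assumes A: "skewnf \<theta> n a" and B: "skewnf \<theta> n (inverse a)" and g: "g \<in> Dset \<theta> n a"
  shows "delta \<theta> n (inverse a) (delta \<theta> n a g) = g"
proof -
  interpret A: skewnf \<theta> n a by (rule A)
  interpret B: skewnf \<theta> n "inverse a" by (rule B)
  define g' where "g' = delta \<theta> n a g"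
  have g'D: "g' \<in> Dset \<theta> n (inverse a)" using A.keyD(1)[OF g] by (simp add: g'_def)
  define g'' where "g'' = delta \<theta> n (inverse a) g'"
  have g''D: "g'' \<in> Dset \<theta> n a" using B.keyD(1)[OF g'D] by (simp add: g''_def)
  have "sigma \<theta> n a g'' = dual n (dual n (sigma \<theta> n a g))"
    using B.keyD(2)[OF g'D] A.keyD(2)[OF g] by (simp add: g''_def g'_def)
  then have "sigma \<theta> n a g \<subseteq> sigma \<theta> n a g''" using dual_dual_sub[OF A.sigma_Fn[OF g]] by simp
  then have dv: "rdvd \<theta> g'' g" using A.sigma_order_D[OF g''D g] by simp
  have "degree g'' = degree g"
    using B.keyD(3)[OF g'D] A.keyD(3)[OF g] A.keyD(4)[OF g] by (simp add: g''_def g'_def)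
  moreover obtain s where "g = skew_mult \<theta> s g''" using dv by (auto simp: rdvd_def)
  moreover have "lead_coeff g'' = 1" "lead_coeff g = 1" using g''D g by (auto simp: Dset_def)
  ultimately have "g = g''" using A.monic_dvd_eq[of g'' g s] by simp
  then show ?thesis by (simp add: g''_def g'_def)
qed


theorem theorem6p3:
  fixes \<theta> :: "'a::{field,finite} \<Rightarrow> 'a" and n :: nat and a :: 'a
  assumes "field_aut \<theta>" and "n \<ge> 1" and "a \<noteq> 0"
  shows "(\<forall>g\<in>Dset \<theta> n a. delta \<theta> n a g \<in> Dset \<theta> n (inverse a))
    \<and> anti_iso (Dset \<theta> n a) (rdvd \<theta>) (Dset \<theta> n (inverse a)) (rdvd \<theta>) (delta \<theta> n a)
    \<and> anti_iso (Dset \<theta> n a) (rdvd \<theta>) (Tset \<theta> n a) (\<subseteq>) (sigma \<theta> n a)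
    \<and> anti_iso (Dset \<theta> n (inverse a)) (rdvd \<theta>) (Tset \<theta> n (inverse a)) (\<subseteq>) (sigma \<theta> n (inverse a))
    \<and> anti_iso (Tset \<theta> n a) (\<subseteq>) (Tset \<theta> n (inverse a)) (\<subseteq>) (dual n)
    \<and> (\<forall>g\<in>Dset \<theta> n a. sigma \<theta> n (inverse a) (delta \<theta> n a g) = dual n (sigma \<theta> n a g))
    \<and> (\<forall>g\<in>Dset \<theta> n a. \<forall>h. xnb n a = skew_mult \<theta> h g \<longrightarrow>
         dual n (sigma \<theta> n a g) = sigma \<theta> n (inverse a) (delta \<theta> n a g)
       \<and> dual n (sigma \<theta> n a g) = rowspace n (circ \<theta> n (inverse a) (hhat \<theta> n h)))"
proof -
  have sA: "skewnf \<theta> n a" by unfold_locales (use assms in auto)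
  have sB: "skewnf \<theta> n (inverse a)" by unfold_locales (use assms in auto)
  interpret A: skewnf \<theta> n a by (rule sA)
  interpret B: skewnf \<theta> n "inverse a" by (rule sB)
  have sB': "skewnf \<theta> n (inverse (inverse a))" using sA by simp
  have rt1: "\<And>g. g \<in> Dset \<theta> n a \<Longrightarrow> delta \<theta> n (inverse a) (delta \<theta> n a g) = g"
    by (rule round_trip[OF sA sB])
  have rt2: "\<And>g. g \<in> Dset \<theta> n (inverse a) \<Longrightarrow> delta \<theta> n a (delta \<theta> n (inverse a) g) = g"
    using round_trip[OF sB sB'] by simp
  have D1: "\<And>g. g \<in> Dset \<theta> n a \<Longrightarrow> delta \<theta> n a g \<in> Dset \<theta> n (inverse a)" by (rule A.keyD(1))
  have D2: "\<And>g. g \<in> Dset \<theta> n (inverse a) \<Longrightarrow> delta \<theta> n (inverse a) g \<in> Dset \<theta> n a"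
    using B.keyD(1) by simp
  have S1: "\<And>g. g \<in> Dset \<theta> n a \<Longrightarrow> sigma \<theta> n (inverse a) (delta \<theta> n a g) = dual n (sigma \<theta> n a g)"
    by (rule A.keyD(2))
  have S2: "\<And>g. g \<in> Dset \<theta> n (inverse a) \<Longrightarrow> sigma \<theta> n a (delta \<theta> n (inverse a) g) = dual n (sigma \<theta> n (inverse a) g)"
    using B.keyD(2) by simp
  have dd1: "\<And>g. g \<in> Dset \<theta> n a \<Longrightarrow> dual n (dual n (sigma \<theta> n a g)) = sigma \<theta> n a g"
  proof -
    fix g assume g: "g \<in> Dset \<theta> n a"
    have "dual n (dual n (sigma \<theta> n a g)) = sigma \<theta> n a (delta \<theta> n (inverse a) (delta \<theta> n a g))"
      using S2[OF D1[OF g]] S1[OF g] by simp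
    then show "dual n (dual n (sigma \<theta> n a g)) = sigma \<theta> n a g" using rt1[OF g] by simp
  qed
  have dd2: "\<And>g. g \<in> Dset \<theta> n (inverse a) \<Longrightarrow> dual n (dual n (sigma \<theta> n (inverse a) g)) = sigma \<theta> n (inverse a) g"
  proof -
    fix g assume g: "g \<in> Dset \<theta> n (inverse a)"
    have "dual n (dual n (sigma \<theta> n (inverse a) g)) = sigma \<theta> n (inverse a) (delta \<theta> n a (delta \<theta> n (inverse a) g))"
      using S1[OF D2[OF g]] S2[OF g] by simp
    then show "dual n (dual n (sigma \<theta> n (inverse a) g)) = sigma \<theta> n (inverse a) g" using rt2[OF g] by simp
  qed
  have TA: "\<And>C. C \<in> Tset \<theta> n a \<Longrightarrow> \<exists>g\<in>Dset \<theta> n a. C = sigma \<theta> n a g"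
    using A.sigma_bij unfolding bij_betw_def by blast
  have TB: "\<And>C. C \<in> Tset \<theta> n (inverse a) \<Longrightarrow> \<exists>g\<in>Dset \<theta> n (inverse a). C = sigma \<theta> n (inverse a) g"
    using B.sigma_bij unfolding bij_betw_def by blast
  have sTA: "\<And>g. g \<in> Dset \<theta> n a \<Longrightarrow> sigma \<theta> n a g \<in> Tset \<theta> n a"
    by (rule bij_betw_apply[OF A.sigma_bij])
  have sTB: "\<And>g. g \<in> Dset \<theta> n (inverse a) \<Longrightarrow> sigma \<theta> n (inverse a) g \<in> Tset \<theta> n (inverse a)"
    by (rule bij_betw_apply[OF B.sigma_bij])
  have ddT1: "\<And>C. C \<in> Tset \<theta> n a \<Longrightarrow> dual n (dual n C) = C" using TA dd1 by blast
  have ddT2: "\<And>C. C \<in> Tset \<theta> n (inverse a) \<Longrightarrow> dual n (dual n C) = C" using TB dd2 by blast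
  have dT1: "\<And>C. C \<in> Tset \<theta> n a \<Longrightarrow> dual n C \<in> Tset \<theta> n (inverse a)"
    using TA S1 sTB D1 by metis
  have dT2: "\<And>C. C \<in> Tset \<theta> n (inverse a) \<Longrightarrow> dual n C \<in> Tset \<theta> n a"
    using TB S2 sTA D2 by metis
  have c2: "anti_iso (Dset \<theta> n a) (rdvd \<theta>) (Dset \<theta> n (inverse a)) (rdvd \<theta>) (delta \<theta> n a)"
  proof (rule anti_iso_intro)
    show "bij_betw (delta \<theta> n a) (Dset \<theta> n a) (Dset \<theta> n (inverse a))"
      by (rule bij_betw_byWitness[where f' = "delta \<theta> n (inverse a)"]) (use rt1 rt2 D1 D2 in auto)
    fix g1 g2 assume g: "g1 \<in> Dset \<theta> n a" "g2 \<in> Dset \<theta> n a"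
    have "rdvd \<theta> g1 g2 \<longleftrightarrow> sigma \<theta> n a g2 \<subseteq> sigma \<theta> n a g1" by (rule A.sigma_order_D[OF g])
    also have "\<dots> \<longleftrightarrow> dual n (sigma \<theta> n a g1) \<subseteq> dual n (sigma \<theta> n a g2)"
      using dual_anti dd1[OF g(1)] dd1[OF g(2)] by metis
    also have "\<dots> \<longleftrightarrow> sigma \<theta> n (inverse a) (delta \<theta> n a g1) \<subseteq> sigma \<theta> n (inverse a) (delta \<theta> n a g2)"
      using S1[OF g(1)] S1[OF g(2)] by simp
    also have "\<dots> \<longleftrightarrow> rdvd \<theta> (delta \<theta> n a g2) (delta \<theta> n a g1)"
      by (rule B.sigma_order_D[OF D1[OF g(2)] D1[OF g(1)], symmetric])
    finally show "rdvd \<theta> g1 g2 \<longleftrightarrow> rdvd \<theta> (delta \<theta> n a g2) (delta \<theta> n a g1)" .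
  qed
  have c5: "anti_iso (Tset \<theta> n a) (\<subseteq>) (Tset \<theta> n (inverse a)) (\<subseteq>) (dual n)"
  proof (rule anti_iso_intro)
    show "bij_betw (dual n) (Tset \<theta> n a) (Tset \<theta> n (inverse a))"
      by (rule bij_betw_byWitness[where f' = "dual n"]) (use ddT1 ddT2 dT1 dT2 in auto)
    fix C D assume CD: "C \<in> Tset \<theta> n a" "D \<in> Tset \<theta> n a"
    show "C \<subseteq> D \<longleftrightarrow> dual n D \<subseteq> dual n C"
      using dual_anti ddT1[OF CD(1)] ddT1[OF CD(2)] by metis
  qed
  show ?thesis
  proof (intro conjI ballI allI impI)
    show "\<And>g. g \<in> Dset \<theta> n a \<Longrightarrow> delta \<theta> n a g \<in> Dset \<theta> n (inverse a)" by (rule D1)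
    show "anti_iso (Dset \<theta> n a) (rdvd \<theta>) (Dset \<theta> n (inverse a)) (rdvd \<theta>) (delta \<theta> n a)" by (rule c2)
    show "anti_iso (Dset \<theta> n a) (rdvd \<theta>) (Tset \<theta> n a) (\<subseteq>) (sigma \<theta> n a)" by (rule A.sigma_anti)
    show "anti_iso (Dset \<theta> n (inverse a)) (rdvd \<theta>) (Tset \<theta> n (inverse a)) (\<subseteq>) (sigma \<theta> n (inverse a))"
      by (rule B.sigma_anti)
    show "anti_iso (Tset \<theta> n a) (\<subseteq>) (Tset \<theta> n (inverse a)) (\<subseteq>) (dual n)" by (rule c5)
    show "\<And>g. g \<in> Dset \<theta> n a \<Longrightarrow> sigma \<theta> n (inverse a) (delta \<theta> n a g) = dual n (sigma \<theta> n a g)"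
      by (rule S1)
    fix g h assume g: "g \<in> Dset \<theta> n a" and Xh: "xnb n a = skew_mult \<theta> h g"
    show "dual n (sigma \<theta> n a g) = sigma \<theta> n (inverse a) (delta \<theta> n a g)" using S1[OF g] by simp
    have lg: "lead_coeff g = 1" using g by (simp add: Dset_def)
    show "dual n (sigma \<theta> n a g) = rowspace n (circ \<theta> n (inverse a) (hhat \<theta> n h))"
      using S1[OF g] A.key_hhat[OF lg Xh] by (simp add: sigma_def)
  qed
qed

end
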